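(* Let $d\geq3$ and let $x_1,\dots,x_{d-1}$ be real numbers with $0<x_i<1$ for all $i$ and $x_i\neq x_j$ for at least one pair $(i,j)$. Let $\Omega$ be the quantum channel on $d\times d$ matrices with Kraus operators $A_0,\dots,A_{d-1}$ given by $A_0=\mathrm{diag}(1,x_1,\dots,x_{d-1})$ and, for $m=1,\dots,d-1$, $(A_m)_{ij}=\sqrt{1-x_m^2}\,\delta_{0i}\delta_{mj}$ ($i,j=0,\dots,d-1$), i.e. $\Omega(X)=\sum_{m=0}^{d-1}A_mXA_m^\dagger$. Let $|\Phi^+\rangle=\frac1{\sqrt d}\sum_{i=0}^{d-1}|ii\rangle$ and $\rho_{\Phi^+,\Omega}=(\mathcal{I}\otimes\Omega)(|\Phi^+\rangle\langle\Phi^+|)$. Then $$\lambda_{\max}(\rho_{\Phi^+,\Omega})>\frac{1+2\mathcal{N}(\rho_{\Phi^+,\Omega})}{d},$$ where $\lambda_{\max}$ is the largest eigenvalue and $\mathcal{N}$ is the negativity.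
   Context: The negativity $\mathcal{N}(\sigma)$ of a two-qudit state $\sigma$ is the absolute value of the sum of the negative eigenvalues of its partial transpose $\sigma^\Gamma$ (transpose with respect to one subsystem). *)

theory Defs
  imports "Jordan_Normal_Form.Jordan_Normal_Form" "Jordan_Normal_Form.Schur_Decomposition"
begin

text \<open>Bipartite index convention: basis vector |i,j> of C^d (x) C^d has index i*d+j.\<close>

text \<open>Kraus operators A_0,...,A_{d-1} of the channel Omega (x is indexed 1..d-1).\<close>
definition kraus :: "nat \<Rightarrow> (nat \<Rightarrow> real) \<Rightarrow> nat \<Rightarrow> complex mat" where
  "kraus d x m =
     (if m = 0 then mat d d (\<lambda>(i,j). if i = j then (if i = 0 then 1 else complex_of_real (x i)) else 0)
      else mat d d (\<lambda>(i,j). if i = 0 \<and> j = m then complex_of_real (sqrt (1 - (x m)^2)) else 0))"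

definition channel :: "nat \<Rightarrow> (nat \<Rightarrow> real) \<Rightarrow> complex mat \<Rightarrow> complex mat" where
  "channel d x X = foldr (\<lambda>m acc. kraus d x m * X * mat_adjoint (kraus d x m) + acc) [0..<d] (0\<^sub>m d d)"

definition block :: "nat \<Rightarrow> complex mat \<Rightarrow> nat \<Rightarrow> nat \<Rightarrow> complex mat" where
  "block d R i k = mat d d (\<lambda>(a,b). R $$ (i*d + a, k*d + b))"

definition id_tensor :: "nat \<Rightarrow> (complex mat \<Rightarrow> complex mat) \<Rightarrow> complex mat \<Rightarrow> complex mat" where
  "id_tensor d \<Phi> R = mat (d*d) (d*d) (\<lambda>(r,s). (\<Phi> (block d R (r div d) (s div d))) $$ (r mod d, s mod d))"

definition phi_plus :: "nat \<Rightarrow> complex vec" where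
  "phi_plus d = vec (d*d) (\<lambda>r. if r div d = r mod d then complex_of_real (1 / sqrt (real d)) else 0)"

definition proj :: "complex vec \<Rightarrow> complex mat" where
  "proj v = mat (dim_vec v) (dim_vec v) (\<lambda>(r,s). v $ r * cnj (v $ s))"

definition rho_state :: "nat \<Rightarrow> (nat \<Rightarrow> real) \<Rightarrow> complex mat" where
  "rho_state d x = id_tensor d (channel d x) (proj (phi_plus d))"

text \<open>Partial transpose with respect to the second subsystem.\<close>
definition partial_transpose :: "nat \<Rightarrow> complex mat \<Rightarrow> complex mat" where
  "partial_transpose d R = mat (d*d) (d*d) (\<lambda>(r,s). R $$ ((r div d)*d + s mod d, (s div d)*d + r mod d))"

definition lambda_max :: "complex mat \<Rightarrow> real" where
  "lambda_max A = Max {t. eigenvalue A (complex_of_real t)}"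

text \<open>Negativity: absolute value of the sum of the negative eigenvalues of the partial transpose,
  counted with (algebraic) multiplicity.\<close>
definition negativity :: "nat \<Rightarrow> complex mat \<Rightarrow> real" where
  "negativity d \<sigma> = (let P = partial_transpose d \<sigma> in
     \<bar>\<Sum>t\<in>{t. t < 0 \<and> eigenvalue P (complex_of_real t)}.
        real (Polynomial.order (complex_of_real t) (char_poly P)) * t\<bar>)"

end

theory Submission
  imports Defs
begin


lemma adj_dims[simp]: "dim_row (mat_adjoint A) = dim_col A" "dim_col (mat_adjoint A) = dim_row A"
  by (auto simp: mat_adjoint_def)

lemma adj_entry: "i < dim_col A \<Longrightarrow> j < dim_row A \<Longrightarrow> mat_adjoint A $$ (i,j) = conjugate (A $$ (j,i))"
  by (auto simp: mat_adjoint_def mat_of_rows_def)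

lemma single_sandwich:
  fixes A :: "complex mat"
  assumes A: "A \<in> carrier_mat n n" and ik: "i < n" "k < n" and ab: "a < n" "b < n"
  shows "(A * mat n n (\<lambda>(p,q). if p = i \<and> q = k then c else 0) * mat_adjoint A) $$ (a,b)
     = A $$ (a,i) * c * cnj (A $$ (b,k))"
proof -
  let ?X = "mat n n (\<lambda>(p,q). if p = i \<and> q = k then c else 0)"
  have AX: "(A * ?X) $$ (a,q) = (if q = k then A $$ (a,i) * c else 0)" if "q < n" for q
    using A ik ab that by (simp add: scalar_prod_def row_def col_def if_distrib[of "\<lambda>z. _ * z"] sum.delta cong: if_cong)
  have "(A * ?X * mat_adjoint A) $$ (a,b) = (\<Sum>q<n. (A * ?X) $$ (a,q) * cnj (A $$ (b,q)))"
    using A ab by (simp add: scalar_prod_def adj_entry atLeast0LessThan)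
  also have "\<dots> = (\<Sum>q<n. if q = k then A $$ (a,i) * c * cnj (A $$ (b,q)) else 0)"
    by (rule sum.cong, auto simp: AX)
  also have "\<dots> = A $$ (a,i) * c * cnj (A $$ (b,k))" using ik by (simp add: sum.delta)
  finally show ?thesis .
qed


definition xx :: "(nat \<Rightarrow> real) \<Rightarrow> nat \<Rightarrow> real" where
  "xx x i = (if i = 0 then 1 else x i)"

lemma kraus_carrier[simp]: "kraus d x m \<in> carrier_mat d d"
  by (simp add: kraus_def)

lemma kraus_dims[simp]: "dim_row (kraus d x m) = d" "dim_col (kraus d x m) = d"
  by (simp_all add: kraus_def)

lemma kraus_entry: "a < d \<Longrightarrow> i < d \<Longrightarrow> kraus d x m $$ (a,i) =
   (if m = 0 then (if a = i then complex_of_real (xx x a) else 0)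
    else (if a = 0 \<and> i = m then complex_of_real (sqrt (1 - (x m)^2)) else 0))"
  by (auto simp: kraus_def xx_def)

lemma foldr_sum_entry:
  assumes "\<And>m. F m \<in> carrier_mat n n" "a < n" "b < n"
  shows "foldr (\<lambda>m acc. F m + acc) ms (0\<^sub>m n n) \<in> carrier_mat n n \<and>
    foldr (\<lambda>m acc. F m + acc) ms (0\<^sub>m n n) $$ (a,b) = (\<Sum>m\<leftarrow>ms. F m $$ (a,b))"
  using assms by (induction ms) auto

lemma channel_single:
  assumes x: "\<forall>m\<in>{1..<d}. (x m)^2 \<le> 1" and ik: "i < d" "k < d" and ab: "a < d" "b < d"
  shows "channel d x (mat d d (\<lambda>(p,q). if p = i \<and> q = k then c else 0)) $$ (a,b) =
     (if a = i \<and> b = k then complex_of_real (xx x i * xx x k) * c else 0) +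
     (if a = 0 \<and> b = 0 \<and> i = k \<and> i \<noteq> 0 then complex_of_real (1 - (x i)^2) * c else 0)"
proof -
  let ?X = "mat d d (\<lambda>(p,q). if p = i \<and> q = k then c else 0)"
  let ?F = "\<lambda>m. kraus d x m * ?X * mat_adjoint (kraus d x m)"
  have F: "?F m \<in> carrier_mat d d" for m using kraus_carrier[of d x m] by (intro carrier_matI) auto
  have "channel d x ?X $$ (a,b) = (\<Sum>m\<leftarrow>[0..<d]. ?F m $$ (a,b))"
    unfolding channel_def using foldr_sum_entry[where F = ?F and ms = "[0..<d]" and n = d and a = a and b = b] F ab by blast
  also have "\<dots> = (\<Sum>m<d. ?F m $$ (a,b))"
    by (simp add: sum_list_distinct_conv_sum_set atLeast0LessThan)
  also have "\<dots> = (\<Sum>m<d. kraus d x m $$ (a,i) * c * cnj (kraus d x m $$ (b,k)))"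
    by (rule sum.cong, simp, rule single_sandwich[OF kraus_carrier ik ab])
  also have "\<dots> = (\<Sum>m<d. (if m = 0 then (if a = i \<and> b = k then complex_of_real (xx x i * xx x k) * c else 0)
      else (if a = 0 \<and> b = 0 \<and> i = m \<and> k = m then complex_of_real (1 - (x m)^2) * c else 0)))"
  proof (rule sum.cong)
    fix m assume m: "m \<in> {..<d}"
    show "kraus d x m $$ (a,i) * c * cnj (kraus d x m $$ (b,k)) = (if m = 0 then (if a = i \<and> b = k then complex_of_real (xx x i * xx x k) * c else 0)
      else (if a = 0 \<and> b = 0 \<and> i = m \<and> k = m then complex_of_real (1 - (x m)^2) * c else 0))"
    proof (cases "m = 0")
      case True thus ?thesis using ik ab by (auto simp: kraus_entry)
    next
      case False
      hence "(x m)^2 \<le> 1" using x m by auto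
      hence "sqrt (1 - (x m)^2) * sqrt (1 - (x m)^2) = 1 - (x m)^2" by simp
      hence "complex_of_real (sqrt (1 - (x m)^2)) * complex_of_real (sqrt (1 - (x m)^2)) = complex_of_real (1 - (x m)^2)"
        by (metis of_real_mult)
      hence sq: "complex_of_real (sqrt (1 - (x m)^2)) * c * cnj (complex_of_real (sqrt (1 - (x m)^2))) = complex_of_real (1 - (x m)^2) * c"
        by (simp add: mult.commute mult.left_commute)
      show ?thesis using False ik ab sq by (cases "a = 0 \<and> i = m"; cases "b = 0 \<and> k = m") (auto simp: kraus_entry)
    qed
  qed simp
  also have "\<dots> = (if a = i \<and> b = k then complex_of_real (xx x i * xx x k) * c else 0) +
     (if a = 0 \<and> b = 0 \<and> i = k \<and> i \<noteq> 0 then complex_of_real (1 - (x i)^2) * c else 0)"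
  proof -
    have d0: "0 \<in> {..<d}" using ik by auto
    have "(\<Sum>m<d. (if m = 0 then (if a = i \<and> b = k then complex_of_real (xx x i * xx x k) * c else 0)
      else (if a = 0 \<and> b = 0 \<and> i = m \<and> k = m then complex_of_real (1 - (x m)^2) * c else 0)))
      = (if a = i \<and> b = k then complex_of_real (xx x i * xx x k) * c else 0) +
        (\<Sum>m\<in>{..<d} - {0}. (if a = 0 \<and> b = 0 \<and> i = m \<and> k = m then complex_of_real (1 - (x m)^2) * c else 0))"
      apply (subst sum.remove[OF finite_lessThan d0])
      apply (simp only: refl if_True)
      apply (intro arg_cong2[where f="(+)"] refl sum.cong)
      apply simp
      done
    also have "(\<Sum>m\<in>{..<d} - {0}. (if a = 0 \<and> b = 0 \<and> i = m \<and> k = m then complex_of_real (1 - (x m)^2) * c else 0))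
       = (\<Sum>m\<in>{..<d} - {0}. (if m = i then (if a = 0 \<and> b = 0 \<and> i = k then complex_of_real (1 - (x m)^2) * c else 0) else 0))"
      by (rule sum.cong[OF refl], rename_tac m, case_tac "m = i", simp_all)
    also have "\<dots> = (if a = 0 \<and> b = 0 \<and> i = k \<and> i \<noteq> 0 then complex_of_real (1 - (x i)^2) * c else 0)"
      using ik by (simp add: sum.delta)
    finally show ?thesis .
  qed
  finally show ?thesis .
qed


lemma idx_div[simp]: "p < (d::nat) \<Longrightarrow> (i*d + p) div d = i"
  by simp
lemma idx_mod[simp]: "p < (d::nat) \<Longrightarrow> (i*d + p) mod d = p"
  by simp
lemma idx_lt: "i < (d::nat) \<Longrightarrow> p < d \<Longrightarrow> i*d + p < d*d"
proof -
  assume "i < d" "p < d"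
  hence "i*d + p < i*d + d" by simp
  also have "\<dots> = (i+1)*d" by simp
  also have "\<dots> \<le> d*d" using \<open>i < d\<close> by (metis Suc_eq_plus1 Suc_leI mult_le_mono1)
  finally show ?thesis .
qed
lemma div_lt: "r < (d::nat)*d \<Longrightarrow> r div d < d"
  by (simp add: less_mult_imp_div_less)
lemma mod_lt: "r < (d::nat)*d \<Longrightarrow> r mod d < d"
  by (cases "d = 0") auto
lemma idx_eq: "(s::nat) = r \<longleftrightarrow> (s div d = r div d \<and> s mod d = r mod d)"
  by (metis div_mult_mod_eq)

definition rhoF :: "nat \<Rightarrow> (nat \<Rightarrow> real) \<Rightarrow> nat \<Rightarrow> nat \<Rightarrow> real" where
  "rhoF d x r s = (if r mod d = r div d \<and> s mod d = s div d then xx x (r div d) * xx x (s div d) / d else 0)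
     + (if s = r \<and> r mod d = 0 \<and> r div d \<noteq> 0 then (1 - (x (r div d))^2) / d else 0)"

lemma block_proj_phi:
  assumes "i < d" "k < d"
  shows "block d (proj (phi_plus d)) i k = mat d d (\<lambda>(p,q). if p = i \<and> q = k then complex_of_real (1 / real d) else 0)"
proof (rule eq_matI)
  fix p q assume pq: "p < dim_row (mat d d (\<lambda>(p,q). if p = i \<and> q = k then complex_of_real (1 / real d) else 0))"
    "q < dim_col (mat d d (\<lambda>(p,q). if p = i \<and> q = k then complex_of_real (1 / real d) else 0))"
  hence p: "p < d" and q: "q < d" by auto
  have l1: "i*d+p < d*d" "k*d+q < d*d" using idx_lt assms p q by auto
  have c: "complex_of_real (1 / sqrt (real d)) * cnj (complex_of_real (1 / sqrt (real d))) = complex_of_real (1 / real d)"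
  proof -
    have "(1 / sqrt (real d)) * (1 / sqrt (real d)) = 1 / real d" by (simp add: real_sqrt_mult[symmetric])
    thus ?thesis by (metis complex_cnj_complex_of_real of_real_mult)
  qed
  show "block d (proj (phi_plus d)) i k $$ (p, q) = mat d d (\<lambda>(p,q). if p = i \<and> q = k then complex_of_real (1 / real d) else 0) $$ (p, q)"
    using p q l1 c by (auto simp: block_def proj_def phi_plus_def)
qed (auto simp: block_def)

lemma rho_carrier: "rho_state d x \<in> carrier_mat (d*d) (d*d)"
  by (simp add: rho_state_def id_tensor_def)

lemma rho_entry:
  assumes x: "\<forall>m\<in>{1..<d}. (x m)^2 \<le> 1" and rs: "r < d*d" "s < d*d"
  shows "rho_state d x $$ (r,s) = complex_of_real (rhoF d x r s)"
proof -
  have i: "r div d < d" "s div d < d" "r mod d < d" "s mod d < d" using rs div_lt mod_lt by auto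
  have "rho_state d x $$ (r,s) = channel d x (block d (proj (phi_plus d)) (r div d) (s div d)) $$ (r mod d, s mod d)"
    using rs by (simp add: rho_state_def id_tensor_def)
  also have "\<dots> = (if r mod d = r div d \<and> s mod d = s div d then complex_of_real (xx x (r div d) * xx x (s div d)) * complex_of_real (1 / real d) else 0) +
     (if r mod d = 0 \<and> s mod d = 0 \<and> r div d = s div d \<and> r div d \<noteq> 0 then complex_of_real (1 - (x (r div d))^2) * complex_of_real (1 / real d) else 0)"
    unfolding block_proj_phi[OF i(1,2)] by (rule channel_single[OF x i])
  also have "\<dots> = complex_of_real (rhoF d x r s)"
  proof -
    have cond: "(r mod d = 0 \<and> s mod d = 0 \<and> r div d = s div d \<and> r div d \<noteq> 0) = (s = r \<and> r mod d = 0 \<and> r div d \<noteq> 0)"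
      using idx_eq[of s r d] by auto
    have e1: "\<And>p q. complex_of_real p * complex_of_real (1 / real d) = complex_of_real (p / real d)"
      by (metis divide_inverse mult_1 of_real_mult)
    show ?thesis unfolding rhoF_def cond of_real_add e1 by (simp only: if_distrib[of complex_of_real] of_real_0)
  qed
  finally show ?thesis .
qed


definition gam :: "(nat \<Rightarrow> real) \<Rightarrow> nat \<Rightarrow> nat \<Rightarrow> real" where
  "gam x c e = (if c = e then 1 else if c < e then (if c = 0 then x e else 1) else - (if e = 0 then x c else 1))"
definition del :: "nat \<Rightarrow> nat \<Rightarrow> real" where
  "del c e = (if c = e then 0 else 1)"
definition alp :: "(nat \<Rightarrow> real) \<Rightarrow> nat \<Rightarrow> nat \<Rightarrow> real" where
  "alp x c e = (if c < e then (if c = 0 then x e else 1) else (if e = 0 then x c else 1))"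
definition gamI :: "(nat \<Rightarrow> real) \<Rightarrow> nat \<Rightarrow> nat \<Rightarrow> real" where
  "gamI x c e = (if c = e then 1 else if c < e then alp x c e / (1 + (alp x c e)^2) else - alp x c e / (1 + (alp x c e)^2))"
definition delI :: "(nat \<Rightarrow> real) \<Rightarrow> nat \<Rightarrow> nat \<Rightarrow> real" where
  "delI x c e = (if c = e then 0 else 1 / (1 + (alp x c e)^2))"
definition muc :: "nat \<Rightarrow> (nat \<Rightarrow> real) \<Rightarrow> nat \<Rightarrow> nat \<Rightarrow> real" where
  "muc d x c e = (if c = e then (xx x c)^2 / d else if c < e then (if c = 0 then 1 else x c * x e) / d
     else - (if e = 0 then (x c)^2 else x c * x e) / d)"
definition wc :: "nat \<Rightarrow> (nat \<Rightarrow> real) \<Rightarrow> nat \<Rightarrow> nat \<Rightarrow> real" where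
  "wc d x a b = xx x a * xx x b / d"
definition gc :: "nat \<Rightarrow> (nat \<Rightarrow> real) \<Rightarrow> nat \<Rightarrow> nat \<Rightarrow> real" where
  "gc d x a b = (if b = 0 \<and> a \<noteq> 0 then (1 - (x a)^2) / d else 0)"
definition Qc :: "(nat \<Rightarrow> real) \<Rightarrow> nat \<Rightarrow> nat \<Rightarrow> nat \<Rightarrow> nat \<Rightarrow> real" where
  "Qc x a b c e = (if a = c \<and> b = e then gam x c e else 0) + (if a = e \<and> b = c then del c e else 0)"

lemma E1: "gc d x a b * Qc x a b c e + wc d x a b * Qc x b a c e = Qc x a b c e * muc d x c e"
proof -
  consider "c = e" | "c < e" "c = 0" | "c < e" "c \<noteq> 0" | "e < c" "e = 0" | "e < c" "e \<noteq> 0" by linarith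
  thus ?thesis
  proof cases
    case 1 thus ?thesis by (auto simp: Qc_def gc_def wc_def muc_def gam_def del_def power2_eq_square)
  next
    case 2 thus ?thesis by (auto simp: Qc_def gc_def wc_def muc_def gam_def del_def xx_def power2_eq_square add_divide_distrib[symmetric])
  next
    case 3 thus ?thesis by (auto simp: Qc_def gc_def wc_def muc_def gam_def del_def xx_def)
  next
    case 4 thus ?thesis by (auto simp: Qc_def gc_def wc_def muc_def gam_def del_def xx_def power2_eq_square add_divide_distrib[symmetric] diff_divide_distrib[symmetric] algebra_simps)
  next
    case 5 thus ?thesis by (auto simp: Qc_def gc_def wc_def muc_def gam_def del_def xx_def)
  qed
qed

lemma E2: "gamI x p q * Qc x p q c e + delI x p q * Qc x q p c e = (if p = c \<and> q = e then 1 else 0)"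
proof -
  have pos: "1 + (alp x c e)^2 \<noteq> 0" for c e by (smt (verit) zero_le_power2)
  have pos4: "1 + (y * (y * 2) + y * (y * (y * y))) \<noteq> 0" for y :: real
  proof -
    have "1 + (y * (y * 2) + y * (y * (y * y))) = (1 + y*y)^2" by (simp add: power2_eq_square algebra_simps)
    moreover have "1 + y*y > 0" by (smt (verit) zero_le_square)
    ultimately show ?thesis by simp
  qed
  have l1: "1 / (1 + y^2) + y * y / (1 + y^2) = 1" "y * y / (1 + y^2) + 1 / (1 + y^2) = 1" for y :: real
  proof -
    have "1 + y^2 \<noteq> 0" by (smt (verit) zero_le_power2)
    thus "1 / (1 + y^2) + y * y / (1 + y^2) = 1" "y * y / (1 + y^2) + 1 / (1 + y^2) = 1"
      by (simp_all add: field_simps power2_eq_square)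
  qed
  have sym: "alp x e c = alp x c e" for c e by (auto simp: alp_def)
  consider "p = q" | "p < q" | "q < p" by linarith
  thus ?thesis
  proof cases
    case 1 thus ?thesis by (auto simp: Qc_def gamI_def delI_def gam_def del_def)
  next
    case 2 thus ?thesis using pos[of p q] sym[of p q] l1
      by (auto simp: Qc_def gamI_def delI_def gam_def del_def alp_def split: if_splits)
  next
    case 3 thus ?thesis using pos[of p q] sym[of p q] l1
      by (auto simp: Qc_def gamI_def delI_def gam_def del_def alp_def split: if_splits)
  qed
qed


definition sw :: "nat \<Rightarrow> nat \<Rightarrow> nat" where "sw d r = (r mod d) * d + r div d"

lemma sw_props: assumes "r < d*d" shows "sw d r < d*d" "sw d r div d = r mod d" "sw d r mod d = r div d"
  using assms div_lt[OF assms] mod_lt[OF assms] idx_lt by (auto simp: sw_def)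

lemma sparse_mult:
  fixes A B :: "complex mat"
  assumes A: "A \<in> carrier_mat n n" and B: "B \<in> carrier_mat n m" and r: "r < n" and t: "t < m" and sg: "\<sigma> < n"
    and Ar: "\<And>u. u < n \<Longrightarrow> A $$ (r,u) = (if u = r then f else 0) + (if u = \<sigma> then g else 0)"
  shows "(A * B) $$ (r,t) = f * B $$ (r,t) + g * B $$ (\<sigma>,t)"
proof -
  have "(A * B) $$ (r,t) = (\<Sum>u\<in>{0..<n}. A $$ (r,u) * B $$ (u,t))"
    using A B r t by (simp add: scalar_prod_def)
  also have "\<dots> = (\<Sum>u\<in>{0..<n}. (if u = r then f * B $$ (u,t) else 0) + (if u = \<sigma> then g * B $$ (u,t) else 0))"
    by (rule sum.cong, simp, simp add: Ar distrib_right)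
  also have "\<dots> = f * B $$ (r,t) + g * B $$ (\<sigma>,t)"
    using r sg by (simp add: sum.distrib sum.delta')
  finally show ?thesis .
qed

definition PT where "PT d x = partial_transpose d (rho_state d x)"

lemma PT_carrier: "PT d x \<in> carrier_mat (d*d) (d*d)" by (simp add: PT_def partial_transpose_def)

lemma PT_entry:
  assumes x: "\<forall>m\<in>{1..<d}. (x m)^2 \<le> 1" and rs: "r < d*d" "s < d*d"
  shows "PT d x $$ (r,s) = complex_of_real ((if s = r then gc d x (r div d) (r mod d) else 0)
     + (if s = sw d r then wc d x (r div d) (r mod d) else 0))"
proof -
  have i: "r div d < d" "s div d < d" "r mod d < d" "s mod d < d" using rs div_lt mod_lt by auto
  define r' where "r' = (r div d)*d + s mod d"
  define s' where "s' = (s div d)*d + r mod d"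
  have r': "r' < d*d" "r' div d = r div d" "r' mod d = s mod d" using i idx_lt by (auto simp: r'_def)
  have s': "s' < d*d" "s' div d = s div d" "s' mod d = r mod d" using i idx_lt by (auto simp: s'_def)
  have "PT d x $$ (r,s) = rho_state d x $$ (r', s')"
    using rs by (simp add: PT_def partial_transpose_def r'_def s'_def)
  also have "\<dots> = complex_of_real (rhoF d x r' s')" by (rule rho_entry[OF x r'(1) s'(1)])
  also have "rhoF d x r' s' = (if s = r then gc d x (r div d) (r mod d) else 0)
     + (if s = sw d r then wc d x (r div d) (r mod d) else 0)"
  proof -
    have e1: "(s' = r') = (s = r)" using idx_eq[of s' r' d] idx_eq[of s r d] r' s' by auto
    have e2: "(s = sw d r) = (s mod d = r div d \<and> r mod d = s div d)"
      using idx_eq[of s "sw d r" d] sw_props[OF rs(1)] by auto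
    show ?thesis unfolding rhoF_def r'(2,3) s'(2,3) e1 e2 gc_def wc_def by auto
  qed
  finally show ?thesis .
qed

definition Qm where "Qm d x = mat (d*d) (d*d) (\<lambda>(u,t). complex_of_real (Qc x (u div d) (u mod d) (t div d) (t mod d)))"
definition Qi where "Qi d x = mat (d*d) (d*d) (\<lambda>(s,u). complex_of_real ((if u = s then gamI x (s div d) (s mod d) else 0) + (if u = sw d s then delI x (s div d) (s mod d) else 0)))"
definition Dm where "Dm d x = mat (d*d) (d*d) (\<lambda>(u,t). if u = t then complex_of_real (muc d x (t div d) (t mod d)) else 0)"

lemma carriers: "Qm d x \<in> carrier_mat (d*d) (d*d)" "Qi d x \<in> carrier_mat (d*d) (d*d)" "Dm d x \<in> carrier_mat (d*d) (d*d)"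
  by (auto simp: Qm_def Qi_def Dm_def)

lemma PQ_QD: assumes x: "\<forall>m\<in>{1..<d}. (x m)^2 \<le> 1"
  shows "PT d x * Qm d x = Qm d x * Dm d x"
proof (rule eq_matI)
  fix r t assume "r < dim_row (Qm d x * Dm d x)" "t < dim_col (Qm d x * Dm d x)"
  hence r: "r < d*d" and t: "t < d*d" by (auto simp: Qm_def Dm_def)
  have "(PT d x * Qm d x) $$ (r,t) = complex_of_real (gc d x (r div d) (r mod d)) * Qm d x $$ (r,t)
     + complex_of_real (wc d x (r div d) (r mod d)) * Qm d x $$ (sw d r,t)"
    by (rule sparse_mult[OF PT_carrier carriers(1) r t sw_props(1)[OF r]], simp add: PT_entry[OF x r] if_distrib[of complex_of_real])
  also have "\<dots> = complex_of_real (gc d x (r div d) (r mod d) * Qc x (r div d) (r mod d) (t div d) (t mod d)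
       + wc d x (r div d) (r mod d) * Qc x (r mod d) (r div d) (t div d) (t mod d))"
    using r t sw_props[OF r] by (simp add: Qm_def)
  also have "\<dots> = complex_of_real (Qc x (r div d) (r mod d) (t div d) (t mod d) * muc d x (t div d) (t mod d))"
    by (simp only: E1)
  also have "\<dots> = (Qm d x * Dm d x) $$ (r,t)"
  proof -
    have "(Qm d x * Dm d x) $$ (r,t) = (\<Sum>u\<in>{0..<d*d}. Qm d x $$ (r,u) * (if u = t then complex_of_real (muc d x (t div d) (t mod d)) else 0))"
      using r t by (simp add: scalar_prod_def Qm_def Dm_def)
    also have "\<dots> = Qm d x $$ (r,t) * complex_of_real (muc d x (t div d) (t mod d))"
      using t by (simp add: if_distrib[of "\<lambda>z. _ * z"] sum.delta' cong: if_cong)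
    finally show ?thesis using r t by (simp add: Qm_def)
  qed
  finally show "(PT d x * Qm d x) $$ (r,t) = (Qm d x * Dm d x) $$ (r,t)" .
qed (auto simp: Qm_def Dm_def PT_def partial_transpose_def)

lemma QiQ: "Qi d x * Qm d x = 1\<^sub>m (d*d)"
proof (rule eq_matI)
  fix s t assume "s < dim_row (1\<^sub>m (d*d) :: complex mat)" "t < dim_col (1\<^sub>m (d*d) :: complex mat)"
  hence s: "s < d*d" and t: "t < d*d" by auto
  have "(Qi d x * Qm d x) $$ (s,t) = complex_of_real (gamI x (s div d) (s mod d)) * Qm d x $$ (s,t)
     + complex_of_real (delI x (s div d) (s mod d)) * Qm d x $$ (sw d s,t)"
    by (rule sparse_mult[OF carriers(2) carriers(1) s t sw_props(1)[OF s]], simp add: Qi_def s if_distrib[of complex_of_real])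
  also have "\<dots> = complex_of_real (gamI x (s div d) (s mod d) * Qc x (s div d) (s mod d) (t div d) (t mod d)
       + delI x (s div d) (s mod d) * Qc x (s mod d) (s div d) (t div d) (t mod d))"
    using s t sw_props[OF s] by (simp add: Qm_def)
  also have "\<dots> = complex_of_real (if s div d = t div d \<and> s mod d = t mod d then 1 else 0)"
    by (simp only: E2)
  also have "\<dots> = 1\<^sub>m (d*d) $$ (s,t)" using s t idx_eq[of s t d] by auto
  finally show "(Qi d x * Qm d x) $$ (s,t) = 1\<^sub>m (d*d) $$ (s,t)" .
qed (auto simp: Qm_def Qi_def)


definition mu :: "nat \<Rightarrow> (nat \<Rightarrow> real) \<Rightarrow> nat \<Rightarrow> real" where
  "mu d x s = muc d x (s div d) (s mod d)"

lemma charpoly_PT: assumes x: "\<forall>m\<in>{1..<d}. (x m)^2 \<le> 1"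
  shows "char_poly (PT d x) = (\<Prod>s\<leftarrow>[0..<d*d]. [:- complex_of_real (mu d x s), 1:])"
proof -
  have QQi: "Qm d x * Qi d x = 1\<^sub>m (d*d)"
    by (rule mat_mult_left_right_inverse[OF carriers(2) carriers(1) QiQ])
  have "PT d x = PT d x * (Qm d x * Qi d x)" using PT_carrier[of d x] QQi by simp
  also have "\<dots> = (PT d x * Qm d x) * Qi d x"
    by (rule assoc_mult_mat[symmetric, OF PT_carrier carriers(1) carriers(2)])
  also have "\<dots> = Qm d x * Dm d x * Qi d x" by (simp add: PQ_QD[OF x])
  finally have eq: "PT d x = Qm d x * Dm d x * Qi d x" .
  have sim: "similar_mat (PT d x) (Dm d x)"
    by (rule similar_matI[of _ _ "Qm d x" "Qi d x" "d*d"], insert PT_carrier[of d x] carriers[of d x] QQi QiQ eq, auto)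
  have ut: "upper_triangular (Dm d x)" by (auto simp: upper_triangular_def Dm_def)
  have "char_poly (PT d x) = char_poly (Dm d x)" by (rule char_poly_similar[OF sim])
  also have "\<dots> = (\<Prod>a\<leftarrow>diag_mat (Dm d x). [:- a, 1:])"
    by (rule char_poly_upper_triangular[OF carriers(3) ut])
  also have "diag_mat (Dm d x) = map (\<lambda>s. complex_of_real (mu d x s)) [0..<d*d]"
    by (auto simp: diag_mat_def Dm_def mu_def intro!: nth_equalityI)
  finally show ?thesis by (simp add: comp_def)
qed


lemma lin_ne0: "[:- (b::complex), 1:] \<noteq> 0" by simp

lemma prod_lin_ne0: "(\<Prod>s\<in>S. [:- (c s :: complex), 1:]) \<noteq> 0"
  by (cases "finite S") (auto simp: prod_zero_iff)

lemma order_lin: "Polynomial.order a [:- (b::complex), 1:] = (if a = b then 1 else 0)"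
proof (cases "a = b")
  case True thus ?thesis using order_power_n_n[of a 1] by simp
next
  case False thus ?thesis by (simp, intro order_0I, simp)
qed

lemma order_prod_lin:
  assumes "finite S"
  shows "Polynomial.order a (\<Prod>s\<in>S. [:- (c s :: complex), 1:]) = card {s\<in>S. c s = a}"
  using assms
proof (induction S rule: finite_induct)
  case empty thus ?case using order_0I[of 1 a] by simp
next
  case (insert z S)
  have "Polynomial.order a (\<Prod>s\<in>insert z S. [:- c s, 1:]) = Polynomial.order a ([:- c z, 1:] * (\<Prod>s\<in>S. [:- c s, 1:]))"
    using insert by simp
  also have "\<dots> = Polynomial.order a [:- c z, 1:] + Polynomial.order a (\<Prod>s\<in>S. [:- c s, 1:])"
    by (rule order_mult, simp only: mult_eq_0_iff de_Morgan_disj, rule conjI, rule lin_ne0, rule prod_lin_ne0)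
  also have "\<dots> = card {s\<in>insert z S. c s = a}"
  proof (cases "c z = a")
    case True
    hence "{s\<in>insert z S. c s = a} = insert z {s\<in>S. c s = a}" by auto
    thus ?thesis using True insert by (simp add: order_lin)
  next
    case False
    hence "{s\<in>insert z S. c s = a} = {s\<in>S. c s = a}" by auto
    thus ?thesis using False insert by (simp add: order_lin)
  qed
  finally show ?case .
qed

lemma negativity_val:
  assumes x: "\<forall>m\<in>{1..<d}. (x m)^2 \<le> 1"
  shows "negativity d (rho_state d x) = \<bar>\<Sum>s\<in>{s. s < d*d \<and> mu d x s < 0}. mu d x s\<bar>"
proof -
  let ?P = "PT d x"
  let ?A = "{s. s < d*d \<and> mu d x s < 0}"
  have cp: "char_poly ?P = (\<Prod>s\<in>{0..<d*d}. [:- complex_of_real (mu d x s), 1:])"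
    unfolding charpoly_PT[OF x] by (subst prod.distinct_set_conv_list[symmetric]) auto
  have ev: "eigenvalue ?P (complex_of_real t) \<longleftrightarrow> (\<exists>s<d*d. mu d x s = t)" for t
  proof -
    have "eigenvalue ?P (complex_of_real t) \<longleftrightarrow> poly (char_poly ?P) (complex_of_real t) = 0"
      by (rule eigenvalue_root_char_poly[OF PT_carrier])
    also have "\<dots> \<longleftrightarrow> (\<exists>s<d*d. mu d x s = t)"
      unfolding cp poly_prod by (auto simp: prod_zero_iff)
    finally show ?thesis .
  qed
  have T: "{t. t < 0 \<and> eigenvalue ?P (complex_of_real t)} = mu d x ` ?A"
    unfolding ev by auto
  have ord: "real (Polynomial.order (complex_of_real t) (char_poly ?P)) = real (card {s\<in>?A. mu d x s = t})" if "t \<in> mu d x ` ?A" for t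
  proof -
    have "Polynomial.order (complex_of_real t) (char_poly ?P) = card {s\<in>{0..<d*d}. complex_of_real (mu d x s) = complex_of_real t}"
      unfolding cp by (rule order_prod_lin) simp
    also have "{s\<in>{0..<d*d}. complex_of_real (mu d x s) = complex_of_real t} = {s\<in>?A. mu d x s = t}"
      using that by auto
    finally show ?thesis by simp
  qed
  have fin: "finite ?A" by simp
  have "(\<Sum>t\<in>{t. t < 0 \<and> eigenvalue ?P (complex_of_real t)}. real (Polynomial.order (complex_of_real t) (char_poly ?P)) * t)
     = (\<Sum>t\<in>mu d x ` ?A. real (card {s\<in>?A. mu d x s = t}) * t)"
    unfolding T by (rule sum.cong, simp, simp add: ord)
  also have "\<dots> = (\<Sum>t\<in>mu d x ` ?A. (\<Sum>s\<in>{s\<in>?A. mu d x s = t}. mu d x s))"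
    by (rule sum.cong, simp, simp)
  also have "\<dots> = (\<Sum>s\<in>?A. mu d x s)"
    by (rule sum.image_gen[OF fin, symmetric])
  finally show ?thesis unfolding negativity_def Let_def PT_def[symmetric] by simp
qed


definition Kd :: "nat \<Rightarrow> (nat \<Rightarrow> real) \<Rightarrow> real" where
  "Kd d x = (\<Sum>s\<in>{0..<d*d}. if s div d = s mod d then (xx x (s div d))^2 else 0)"

lemma lambda_max_ge:
  assumes x: "\<forall>m\<in>{1..<d}. (x m)^2 \<le> 1" and d: "d > 0"
  shows "lambda_max (rho_state d x) \<ge> Kd d x / d"
proof -
  let ?R = "rho_state d x"
  define vr where "vr s = (if s div d = s mod d then xx x (s div d) else 0)" for s
  define v where "v = vec (d*d) (\<lambda>s. complex_of_real (vr s))"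
  have pt: "rhoF d x r s * vr s = (if r div d = r mod d then xx x (r div d) / d else 0) * (if s div d = s mod d then (xx x (s div d))^2 else 0)" for r s
    by (auto simp: rhoF_def vr_def power2_eq_square)
  have rs: "(\<Sum>s\<in>{0..<d*d}. rhoF d x r s * vr s) = Kd d x / d * vr r" for r
    unfolding pt Kd_def sum_distrib_left[symmetric] by (auto simp: vr_def)
  have mv: "?R *\<^sub>v v = complex_of_real (Kd d x / d) \<cdot>\<^sub>v v"
  proof (rule eq_vecI)
    fix r assume "r < dim_vec (complex_of_real (Kd d x / d) \<cdot>\<^sub>v v)"
    hence r: "r < d*d" by (simp add: v_def)
    have "(?R *\<^sub>v v) $ r = (\<Sum>s\<in>{0..<d*d}. ?R $$ (r,s) * v $ s)"
      using r rho_carrier[of d x] by (simp add: scalar_prod_def v_def)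
    also have "\<dots> = (\<Sum>s\<in>{0..<d*d}. complex_of_real (rhoF d x r s * vr s))"
      by (rule sum.cong, simp, simp add: rho_entry[OF x r] v_def)
    also have "\<dots> = complex_of_real (Kd d x / d * vr r)" unfolding of_real_sum[symmetric] rs ..
    finally show "(?R *\<^sub>v v) $ r = (complex_of_real (Kd d x / d) \<cdot>\<^sub>v v) $ r" using r by (simp add: v_def)
  qed (insert rho_carrier[of d x], auto simp: v_def)
  have v0: "v \<noteq> 0\<^sub>v (d*d)"
  proof
    assume "v = 0\<^sub>v (d*d)"
    hence "v $ 0 = 0" using d by simp
    thus False using d by (simp add: v_def vr_def xx_def)
  qed
  have ev: "eigenvalue ?R (complex_of_real (Kd d x / d))"
    unfolding eigenvalue_def eigenvector_def using mv v0 rho_carrier[of d x]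
    by (intro exI[of _ v]) (auto simp: v_def)
  have nz: "char_poly ?R \<noteq> 0" using degree_monic_char_poly[OF rho_carrier[of d x]] by auto
  have fin: "finite {t. eigenvalue ?R (complex_of_real t)}"
  proof -
    have "{t. eigenvalue ?R (complex_of_real t)} = complex_of_real -` {z. poly (char_poly ?R) z = 0}"
      using eigenvalue_root_char_poly[OF rho_carrier[of d x]] by auto
    thus ?thesis using finite_vimageI[OF poly_roots_finite[OF nz]] inj_of_real by (metis inj_def)
  qed
  show ?thesis unfolding lambda_max_def using ev fin by (intro Max_ge) auto
qed


lemma sum_pairs_gen: fixes m d :: nat shows "(\<Sum>s\<in>{0..<m*d}. f (s div d) (s mod d)) = (\<Sum>c\<in>{0..<m}. \<Sum>e\<in>{0..<d}. f c e)"
proof (induction m)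
  case 0 thus ?case by simp
next
  case (Suc m)
  have "(\<Sum>s\<in>{0..<Suc m * d}. f (s div d) (s mod d)) = (\<Sum>s\<in>{0..<m*d}. f (s div d) (s mod d)) + (\<Sum>s\<in>{m*d..<m*d+d}. f (s div d) (s mod d))"
  proof -
    have "Suc m * d = m*d + d" by simp
    thus ?thesis using sum.atLeastLessThan_concat[of 0 "m*d" "m*d+d" "\<lambda>s. f (s div d) (s mod d)"] by (simp add: add.commute)
  qed
  also have "(\<Sum>s\<in>{m*d..<m*d+d}. f (s div d) (s mod d)) = (\<Sum>e\<in>{0..<d}. f ((e + m*d) div d) ((e + m*d) mod d))"
    using sum.shift_bounds_nat_ivl[of "\<lambda>s. f (s div d) (s mod d)" 0 "m*d" d] by (simp add: add.commute)
  also have "\<dots> = (\<Sum>e\<in>{0..<d}. f m e)"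
    by (rule sum.cong, simp, simp add: add.commute)
  finally show ?case using Suc by simp
qed

lemma sum_pairs: fixes d :: nat shows "(\<Sum>s\<in>{0..<d*d}. f (s div d) (s mod d)) = (\<Sum>c\<in>{0..<d}. \<Sum>e\<in>{0..<d}. f c e)"
  by (rule sum_pairs_gen)

definition Ssum :: "(nat \<Rightarrow> real) \<Rightarrow> nat \<Rightarrow> real" where "Ssum x n = (\<Sum>c\<in>{1..<n}. (x c)^2)"
definition Psum :: "(nat \<Rightarrow> real) \<Rightarrow> nat \<Rightarrow> real" where "Psum x n = (\<Sum>c\<in>{1..<n}. \<Sum>e\<in>{1..<c}. x c * x e)"
definition Dsum :: "(nat \<Rightarrow> real) \<Rightarrow> nat \<Rightarrow> real" where "Dsum x n = (\<Sum>c\<in>{1..<n}. \<Sum>e\<in>{1..<c}. (x c - x e)^2)"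

lemma Dsum_id: "n \<ge> 1 \<Longrightarrow> Dsum x n = (real n - 2) * Ssum x n - 2 * Psum x n"
proof (induction n rule: dec_induct)
  case base thus ?case by (simp add: Dsum_def Ssum_def Psum_def)
next
  case (step n)
  have inner: "(\<Sum>e\<in>{1..<n}. (x n - x e)^2) = (real n - 1) * (x n)^2 - 2 * x n * (\<Sum>e\<in>{1..<n}. x e) + Ssum x n"
  proof -
    have "(\<Sum>e\<in>{1..<n}. (x n - x e)^2) = (\<Sum>e\<in>{1..<n}. ((x n)^2 - 2 * x n * x e) + (x e)^2)"
      by (rule sum.cong, simp, simp add: power2_diff)
    also have "\<dots> = (\<Sum>e\<in>{1..<n}. (x n)^2) - (\<Sum>e\<in>{1..<n}. 2 * x n * x e) + Ssum x n"
      by (simp add: sum.distrib sum_subtractf Ssum_def)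
    also have "(\<Sum>e\<in>{1..<n}. 2 * x n * x e) = 2 * x n * (\<Sum>e\<in>{1..<n}. x e)"
      by (simp add: sum_distrib_left)
    also have "(\<Sum>e\<in>{1..<n}. (x n)^2) = (real n - 1) * (x n)^2"
      using step(1) by (simp add: of_nat_diff)
    finally show ?thesis .
  qed
  have "Dsum x (Suc n) = Dsum x n + (\<Sum>e\<in>{1..<n}. (x n - x e)^2)"
    using step(1) by (simp add: Dsum_def)
  moreover have "Ssum x (Suc n) = Ssum x n + (x n)^2" using step(1) by (simp add: Ssum_def)
  moreover have "Psum x (Suc n) = Psum x n + x n * (\<Sum>e\<in>{1..<n}. x e)" using step(1) by (simp add: Psum_def sum_distrib_left)
  ultimately show ?case using step(3) inner by (simp add: algebra_simps)
qed

lemma Dsum_pos: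
  assumes "i \<in> {1..<n}" "j \<in> {1..<n}" "x i \<noteq> x j"
  shows "Dsum x n > 0"
proof -
  have "\<exists>c e. c \<in> {1..<n} \<and> e \<in> {1..<c} \<and> x c \<noteq> x e"
  proof (cases "j < i")
    case True thus ?thesis using assms by (intro exI[of _ i] exI[of _ j]) auto
  next
    case False
    hence "i < j" using assms by (metis linorder_neqE_nat)
    thus ?thesis using assms by (intro exI[of _ j] exI[of _ i]) auto
  qed
  then obtain c e where ce: "c \<in> {1..<n}" "e \<in> {1..<c}" "x c \<noteq> x e" by blast
  have "0 < (x c - x e)^2" using ce by simp
  also have "\<dots> \<le> (\<Sum>e\<in>{1..<c}. (x c - x e)^2)" using ce by (intro member_le_sum) auto
  also have "\<dots> \<le> Dsum x n" unfolding Dsum_def using ce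
    by (intro member_le_sum[where i = c and f = "\<lambda>c. \<Sum>e\<in>{1..<c}. (x c - x e)^2"]) (auto intro: sum_nonneg)
  finally show ?thesis .
qed


lemma Kd_val: assumes d: "d > 0" shows "Kd d x = 1 + Ssum x d"
proof -
  have "Kd d x = (\<Sum>c\<in>{0..<d}. \<Sum>e\<in>{0..<d}. if c = e then (xx x c)^2 else 0)"
    unfolding Kd_def by (rule sum_pairs[where f = "\<lambda>c e. if c = e then (xx x c)^2 else 0"])
  also have "\<dots> = (\<Sum>c\<in>{0..<d}. (xx x c)^2)" by (rule sum.cong, simp, simp)
  also have "\<dots> = 1 + (\<Sum>c\<in>{1..<d}. (xx x c)^2)" using d by (subst sum.atLeast_Suc_lessThan) (auto simp: xx_def)
  also have "(\<Sum>c\<in>{1..<d}. (xx x c)^2) = Ssum x d" unfolding Ssum_def by (rule sum.cong, auto simp: xx_def)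
  finally show ?thesis .
qed

lemma neg_val:
  assumes d: "d > 0" and x: "\<forall>m\<in>{1..<d}. 0 < x m"
  shows "(\<Sum>s\<in>{s. s < d*d \<and> mu d x s < 0}. mu d x s) = - (Ssum x d + Psum x d) / d"
proof -
  have neg: "muc d x c e < 0 \<longleftrightarrow> e < c" if "c < d" "e < d" for c e
  proof -
    consider "c = e" | "c < e" | "e < c" by linarith
    thus ?thesis
    proof cases
      case 1 thus ?thesis using d by (simp add: muc_def not_less)
    next
      case 2
      have "e \<noteq> 0" using 2 by auto
      hence xe: "x e > 0" using x that by auto
      show ?thesis
      proof (cases "c = 0")
        case True thus ?thesis using 2 d by (simp add: muc_def not_less)
      next
        case False
        hence "x c > 0" using x that by auto
        hence "0 < x c * x e / d" using xe d by simp
        thus ?thesis using 2 False by (simp add: muc_def)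
      qed
    next
      case 3
      have "c \<noteq> 0" using 3 by auto
      hence xc: "x c > 0" using x that by auto
      show ?thesis
      proof (cases "e = 0")
        case True thus ?thesis using 3 d xc by (simp add: muc_def)
      next
        case False
        hence "x e > 0" using x that by auto
        hence "0 < x c * x e / d" using xc d by simp
        thus ?thesis using 3 False by (simp add: muc_def)
      qed
    qed
  qed
  have "{s. s < d*d \<and> mu d x s < 0} = {s\<in>{0..<d*d}. s mod d < s div d}"
    using neg div_lt mod_lt by (auto simp: mu_def)
  hence "(\<Sum>s\<in>{s. s < d*d \<and> mu d x s < 0}. mu d x s) = (\<Sum>s\<in>{0..<d*d}. if s mod d < s div d then muc d x (s div d) (s mod d) else 0)"
    by (simp only: sum.inter_filter[OF finite_atLeastLessThan] mu_def)
  also have "\<dots> = (\<Sum>c\<in>{0..<d}. \<Sum>e\<in>{0..<d}. if e < c then muc d x c e else 0)"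
    by (rule sum_pairs[where f = "\<lambda>c e. if e < c then muc d x c e else 0"])
  also have "\<dots> = (\<Sum>c\<in>{0..<d}. \<Sum>e\<in>{0..<c}. muc d x c e)"
  proof (rule sum.cong, simp)
    fix c assume "c \<in> {0..<d}"
    hence "{e\<in>{0..<d}. e < c} = {0..<c}" by auto
    thus "(\<Sum>e\<in>{0..<d}. if e < c then muc d x c e else 0) = (\<Sum>e\<in>{0..<c}. muc d x c e)"
      using sum.inter_filter[where P = "\<lambda>e. e < c" and g = "muc d x c", OF finite_atLeastLessThan[of 0 d]] by simp
  qed
  also have "\<dots> = (\<Sum>c\<in>{1..<d}. \<Sum>e\<in>{0..<c}. muc d x c e)"
    using d by (subst sum.atLeast_Suc_lessThan) auto
  also have "\<dots> = (\<Sum>c\<in>{1..<d}. - ((x c)^2 / d) + (\<Sum>e\<in>{1..<c}. - (x c * x e) / d))"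
  proof (rule sum.cong, simp)
    fix c assume c: "c \<in> {1..<d}"
    have "(\<Sum>e\<in>{0..<c}. muc d x c e) = muc d x c 0 + (\<Sum>e\<in>{1..<c}. muc d x c e)"
      using c by (subst sum.atLeast_Suc_lessThan) auto
    also have "(\<Sum>e\<in>{1..<c}. muc d x c e) = (\<Sum>e\<in>{1..<c}. - (x c * x e) / d)"
      by (rule sum.cong, auto simp: muc_def)
    finally show "(\<Sum>e\<in>{0..<c}. muc d x c e) = - ((x c)^2 / d) + (\<Sum>e\<in>{1..<c}. - (x c * x e) / d)"
      using c by (simp add: muc_def)
  qed
  also have "\<dots> = - (Ssum x d + Psum x d) / d"
    by (simp add: Ssum_def Psum_def sum.distrib sum_subtractf sum_negf sum_divide_distrib[symmetric] diff_divide_distrib add_divide_distrib)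
  finally show ?thesis .
qed

theorem lemma3:
  fixes d :: nat and x :: "nat \<Rightarrow> real"
  assumes "d \<ge> 3"
    and "\<forall>i\<in>{1..d-1}. 0 < x i \<and> x i < 1"
    and "\<exists>i\<in>{1..d-1}. \<exists>j\<in>{1..d-1}. x i \<noteq> x j"
  shows "lambda_max (rho_state d x) > (1 + 2 * negativity d (rho_state d x)) / real d"
proof -
  have iv: "{1..d-1} = {1..<d}" using assms(1) by auto
  have xpos: "\<forall>m\<in>{1..<d}. 0 < x m" and x1: "\<forall>m\<in>{1..<d}. x m < 1" using assms(2) iv by auto
  have x2: "\<forall>m\<in>{1..<d}. (x m)^2 \<le> 1"
  proof
    fix m assume m: "m \<in> {1..<d}"
    hence "0 < x m" "x m < 1" using xpos x1 by auto
    thus "(x m)^2 \<le> 1" by (simp add: abs_square_le_1)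
  qed
  have d: "d > 0" using assms(1) by auto
  obtain i j where ij: "i \<in> {1..<d}" "j \<in> {1..<d}" "x i \<noteq> x j" using assms(3) iv by auto
  have Dp: "Dsum x d > 0" by (rule Dsum_pos[OF ij])
  have Did: "Dsum x d = (real d - 2) * Ssum x d - 2 * Psum x d" using Dsum_id d by auto
  have S0: "Ssum x d \<ge> 0" unfolding Ssum_def by (rule sum_nonneg) simp
  have P0: "Psum x d \<ge> 0" unfolding Psum_def using xpos
    by (intro sum_nonneg) (auto intro!: mult_nonneg_nonneg less_imp_le)
  have N: "negativity d (rho_state d x) = (Ssum x d + Psum x d) / d"
    unfolding negativity_val[OF x2] neg_val[OF d xpos] using S0 P0 by simp
  have L: "lambda_max (rho_state d x) \<ge> (1 + Ssum x d) / d"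
    using lambda_max_ge[OF x2 d] Kd_val[OF d] by simp
  have key: "1 + 2 * ((Ssum x d + Psum x d) / d) < 1 + Ssum x d"
  proof -
    have "2 * (Ssum x d + Psum x d) < real d * Ssum x d" using Dp Did by (simp add: algebra_simps)
    hence "2 * (Ssum x d + Psum x d) / d < Ssum x d" using d by (simp add: divide_less_eq mult.commute)
    thus ?thesis by simp
  qed
  have "(1 + 2 * negativity d (rho_state d x)) / real d < (1 + Ssum x d) / d"
    unfolding N using key d by (simp add: divide_strict_right_mono)
  thus ?thesis using L by linarith
qed

end
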